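(* In the setting below, for every $\varphi\in X_N$ and $x\in\mathbb{T}_N$: (i) $0\le(\Pi_x\varphi,\varphi)_+\le\sum_{y\in Q_-+x}(A\nabla\varphi(y),\nabla\varphi(y))$; (ii) $0\le(\mathcal{T}\varphi,\varphi)_+\le(\varphi,\varphi)_+$, and both inequalities are strict if $\varphi\ne0$; (iii) $(\mathcal{T}\varphi,\mathcal{T}\varphi)_+\le(\mathcal{T}\varphi,\varphi)_+$.
   Context: Standing: $d\ge2$, $m\ge1$, $L\ge3$ odd, $N\ge1$. $\mathbb{T}_N=(\mathbb{Z}/L^N\mathbb{Z})^d$. $X_N$: maps $\mathbb{T}_N\to\mathbb{R}^m$ with zero sum. $(\nabla_j\varphi)(x)=\varphi(x+e_j)-\varphi(x)$, $\nabla\varphi(x)\in\mathbb{R}^{m\times d}$. $A:\mathbb{R}^{m\times d}\to\mathbb{R}^{m\times d}$ linear, symmetric w.r.t. Frobenius inner product $(\cdot,\cdot)$, $(AF,F)\ge c_0|F|^2$, $c_0>0$; $(\varphi,\psi)_+=\sum_x(A\nabla\varphi(x),\nabla\psi(x))$. Let $l\ge3$ be an integer with $l-1<L^N$; $Q=\{1,\dots,l-1\}^d$, $Q_-=\{0,\dots,l-1\}^d$ in $\mathbb{T}_N$. $\Pi_x$ is the $(\cdot,\cdot)_+$-orthogonal projection of $X_N$ onto $\{\varphi\in X_N:\varphi=0\text{ outside }Q+x\}$; $\mathcal{T}=l^{-d}\sum_{x\in\mathbb{T}_N}\Pi_x$. *)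

theory Defs
  imports "HOL-Analysis.Analysis"
begin

text \<open>Torus points are represented by integer vectors in Z^d (index type 'd, d = CARD('d)),
  fields by M-periodic functions Z^d -> R^m (index type 'm), where M = L^N.\<close>

definition torus :: "nat \<Rightarrow> (int^'d) set" where
  "torus M = {x. \<forall>i. 0 \<le> x$i \<and> x$i < int M}"

definition periodic :: "nat \<Rightarrow> ((int^'d) \<Rightarrow> real^'m) \<Rightarrow> bool" where
  "periodic M \<phi> \<longleftrightarrow> (\<forall>x j. \<phi> (x + axis j (int M)) = \<phi> x)"

definition XN :: "nat \<Rightarrow> ((int^'d) \<Rightarrow> real^'m) set" where
  "XN M = {\<phi>. periodic M \<phi> \<and> (\<Sum>x\<in>torus M. \<phi> x) = 0}"

definition grad :: "((int^'d) \<Rightarrow> real^'m) \<Rightarrow> int^'d \<Rightarrow> real^'d^'m" where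
  "grad \<phi> x = (\<chi> a j. (\<phi> (x + axis j 1) - \<phi> x) $ a)"

definition eform :: "(real^'d^'m \<Rightarrow> real^'d^'m) \<Rightarrow> nat \<Rightarrow>
    ((int^'d) \<Rightarrow> real^'m) \<Rightarrow> ((int^'d) \<Rightarrow> real^'m) \<Rightarrow> real" where
  "eform A M \<phi> \<psi> = (\<Sum>x\<in>torus M. inner (A (grad \<phi> x)) (grad \<psi> x))"

definition tcong :: "nat \<Rightarrow> int^'d \<Rightarrow> int^'d \<Rightarrow> bool" where
  "tcong M x y \<longleftrightarrow> (\<forall>i. x$i mod int M = y$i mod int M)"

definition boxQ :: "nat \<Rightarrow> (int^'d) set" where
  "boxQ l = {q. \<forall>i. 1 \<le> q$i \<and> q$i \<le> int l - 1}"

definition boxQm :: "nat \<Rightarrow> (int^'d) set" where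
  "boxQm l = {q. \<forall>i. 0 \<le> q$i \<and> q$i \<le> int l - 1}"

definition Vsub :: "nat \<Rightarrow> nat \<Rightarrow> int^'d \<Rightarrow> ((int^'d) \<Rightarrow> real^'m) set" where
  "Vsub M l x = {\<psi>\<in>XN M. \<forall>y. (\<not> (\<exists>q\<in>boxQ l. tcong M y (q + x))) \<longrightarrow> \<psi> y = 0}"

definition Pi :: "(real^'d^'m \<Rightarrow> real^'d^'m) \<Rightarrow> nat \<Rightarrow> nat \<Rightarrow> int^'d \<Rightarrow>
    ((int^'d) \<Rightarrow> real^'m) \<Rightarrow> ((int^'d) \<Rightarrow> real^'m)" where
  "Pi A M l x \<phi> = (THE \<psi>. \<psi> \<in> Vsub M l x \<and> (\<forall>\<eta>\<in>Vsub M l x. eform A M (\<lambda>y. \<phi> y - \<psi> y) \<eta> = 0))"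

definition Top :: "(real^'d^'m \<Rightarrow> real^'d^'m) \<Rightarrow> nat \<Rightarrow> nat \<Rightarrow>
    ((int^'d) \<Rightarrow> real^'m) \<Rightarrow> ((int^'d) \<Rightarrow> real^'m)" where
  "Top A M l \<phi> = (\<lambda>y. (1 / real l ^ CARD('d)) *\<^sub>R (\<Sum>x\<in>torus M. Pi A M l x \<phi> y))"

end

theory Submission
  imports Defs
begin


definition per :: "nat \<Rightarrow> (int^'d \<Rightarrow> 'b) \<Rightarrow> bool" where
  "per M f \<longleftrightarrow> (\<forall>x j. f (x + axis j (int M)) = f x)"

definition rep :: "nat \<Rightarrow> int^'d \<Rightarrow> int^'d" where
  "rep M y = (\<chi> i. y$i mod int M)"

lemma periodic_per: "periodic M \<phi> = per M \<phi>"
  by (simp add: periodic_def per_def)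

lemma axis_add_int: "axis j (a + b) = axis j a + (axis j b :: int^'d)"
  by (simp add: vec_eq_iff axis_def)

lemma shift_axis_mult:
  fixes f :: "int^'d \<Rightarrow> 'b"
  assumes h: "\<And>y j. f (y + axis j c) = f y"
  shows "f (y + axis j (c * k)) = f y"
proof -
  have nat: "f (y + axis j (c * int n)) = f y" for n y
  proof (induction n arbitrary: y)
    case 0
    show ?case by (simp add: axis_def zero_vec_def[symmetric])
  next
    case (Suc n)
    have "y + axis j (c * int (Suc n)) = (y + axis j (c * int n)) + axis j c"
      by (simp add: vec_eq_iff axis_def algebra_simps)
    then show ?case using h Suc.IH by (metis add.assoc)
  qed
  show ?thesis
  proof (cases "k \<ge> 0")
    case True
    then obtain n where "k = int n" by (metis nonneg_eq_int)
    then show ?thesis using nat by simp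
  next
    case False
    then obtain n where k: "k = - int n" by (metis linorder_not_le neg_int_cases less_imp_le)
    define y' where "y' = y + axis j (c * k)"
    have yeq: "y' + axis j (c * int n) = y" unfolding y'_def k by (simp add: vec_eq_iff axis_def)
    have e: "f (y' + axis j (c * int n)) = f y'" by (rule nat)
    have "f y = f y'" using e yeq by simp
    then show ?thesis by (simp add: y'_def)
  qed
qed

lemma shift_vec_mult:
  fixes f :: "int^'d \<Rightarrow> 'b"
  assumes h: "\<And>y j. f (y + axis j c) = f y"
  shows "f (y + (\<chi> i. c * k i)) = f y"
proof -
  have "f (y + (\<chi> i. if i \<in> J then c * k i else 0)) = f y" if "finite J" for J
    using that
  proof (induction J rule: finite_induct)
    case empty
    have "(\<chi> i. if i \<in> {} then c * k i else 0) = (0::int^'d)" by (simp add: vec_eq_iff)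
    then show ?case by simp
  next
    case (insert j J)
    have eq: "y + (\<chi> i. if i \<in> insert j J then c * k i else 0)
        = (y + (\<chi> i. if i \<in> J then c * k i else 0)) + axis j (c * k j)"
      using insert(2) by (auto simp: vec_eq_iff axis_def)
    have "f ((y + (\<chi> i. if i \<in> J then c * k i else 0)) + axis j (c * k j))
        = f (y + (\<chi> i. if i \<in> J then c * k i else 0))" by (rule shift_axis_mult[OF h])
    then show ?case using insert.IH eq by (simp add: add.assoc)
  qed
  from this[of UNIV] show ?thesis by simp
qed

lemma per_shift: "per M f \<Longrightarrow> f (y + axis j (int M * k)) = f y"
  by (rule shift_axis_mult) (auto simp: per_def)

lemma tcong_refl[simp]: "tcong M y y" by (simp add: tcong_def)
lemma tcong_sym: "tcong M y z \<Longrightarrow> tcong M z y" by (simp add: tcong_def)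
lemma tcong_trans: "tcong M x y \<Longrightarrow> tcong M y z \<Longrightarrow> tcong M x z" by (simp add: tcong_def)

lemma mod_cancel_add: "((a::int) + c) mod m = (b + c) mod m \<Longrightarrow> a mod m = b mod m"
  by (metis add_diff_cancel_right' mod_diff_left_eq)

lemma tcong_add: "tcong M a b \<Longrightarrow> tcong M (a + c) (b + c)"
  unfolding tcong_def
proof (intro allI)
  fix i assume h: "\<forall>i. a $ i mod int M = b $ i mod int M"
  have "(a$i + c$i) mod int M = (a$i mod int M + c$i) mod int M" by (simp add: mod_add_left_eq)
  also have "\<dots> = (b$i mod int M + c$i) mod int M" using h by simp
  also have "\<dots> = (b$i + c$i) mod int M" by (simp add: mod_add_left_eq)
  finally show "(a + c) $ i mod int M = (b + c) $ i mod int M" by simp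
qed

lemma tcong_add_iff: "tcong M (a + c) (b + c) \<longleftrightarrow> tcong M a b"
  using tcong_add[of M "a+c" "b+c" "-c"] tcong_add[of M a b c] by auto

lemma rep_eq_iff: "rep M a = rep M b \<longleftrightarrow> tcong M a b"
  by (simp add: rep_def tcong_def vec_eq_iff)

lemma tcong_rep: "tcong M y (rep M y)"
  by (simp add: rep_def tcong_def)

lemma rep_in_torus: "M > 0 \<Longrightarrow> rep M y \<in> torus M"
  by (simp add: rep_def torus_def)

lemma rep_torus: "z \<in> torus M \<Longrightarrow> rep M z = z"
  by (simp add: rep_def torus_def vec_eq_iff)

lemma torus_tcong_eq: "z \<in> torus M \<Longrightarrow> w \<in> torus M \<Longrightarrow> tcong M z w \<Longrightarrow> z = w"
  by (metis rep_eq_iff rep_torus)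

lemma per_tcong:
  assumes "per M f" "tcong M y z" shows "f y = f z"
proof -
  define k where "k i = y$i div int M - z$i div int M" for i
  have "y$i = z$i + int M * k i" for i
  proof -
    have e1: "int M * (y$i div int M) + y$i mod int M = y$i" by (metis div_mult_mod_eq mult.commute)
    have e2: "int M * (z$i div int M) + z$i mod int M = z$i" by (metis div_mult_mod_eq mult.commute)
    have e3: "y$i mod int M = z$i mod int M" using assms(2) by (simp add: tcong_def)
    show ?thesis unfolding k_def right_diff_distrib using e1 e2 e3 by linarith
  qed
  then have "y = z + (\<chi> i. int M * k i)" by (simp add: vec_eq_iff)
  moreover have "f (z + (\<chi> i. int M * k i)) = f z"
    by (rule shift_vec_mult) (use assms(1) in \<open>auto simp: per_def\<close>)
  ultimately show ?thesis by simp
qed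

lemma per_rep: "per M f \<Longrightarrow> f (rep M y) = f y"
  using per_tcong tcong_rep tcong_sym by metis

lemma box_eq: "{x::int^'d. \<forall>i. x$i \<in> S} = vec_lambda ` (Pi\<^sub>E UNIV (\<lambda>_. S))"
proof (rule set_eqI, rule iffI)
  fix x :: "int^'d" assume "x \<in> {x. \<forall>i. x$i \<in> S}"
  then have "vec_nth x \<in> Pi\<^sub>E UNIV (\<lambda>_. S)" by auto
  then show "x \<in> vec_lambda ` (Pi\<^sub>E UNIV (\<lambda>_. S))" by (metis image_eqI vec_nth_inverse)
qed auto

lemma finite_box: "finite S \<Longrightarrow> finite {x::int^'d. \<forall>i. x$i \<in> S}"
  by (simp add: box_eq finite_PiE)

lemma card_box: "finite S \<Longrightarrow> card {x::int^'d. \<forall>i. x$i \<in> S} = card S ^ CARD('d)"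
proof -
  assume fS: "finite S"
  have "inj_on (vec_lambda :: ('d \<Rightarrow> int) \<Rightarrow> int^'d) (Pi\<^sub>E UNIV (\<lambda>_. S))"
    by (simp add: inj_on_def vec_lambda_inject)
  then show ?thesis by (simp add: box_eq card_image card_PiE)
qed

lemma torus_box: "torus M = {x::int^'d. \<forall>i. x$i \<in> {0..<int M}}"
  by (auto simp: torus_def)

lemma finite_torus[simp]: "finite (torus M)"
  unfolding torus_box by (rule finite_box) simp

lemma zero_in_torus: "M > 0 \<Longrightarrow> 0 \<in> torus M"
  by (simp add: torus_def)

lemma boxQm_box: "boxQm l = {x::int^'d. \<forall>i. x$i \<in> {0..int l - 1}}"
  by (auto simp: boxQm_def)

lemma finite_boxQm[simp]: "finite (boxQm l)"
  unfolding boxQm_box by (rule finite_box) simp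

lemma card_boxQm: "card (boxQm l :: (int^'d) set) = l ^ CARD('d)"
  unfolding boxQm_box by (subst card_box) auto

lemma sum_torus_shift:
  assumes "per M f" "M > 0"
  shows "(\<Sum>z\<in>torus M. f (z + v)) = (\<Sum>z\<in>torus M. f z)"
proof -
  let ?h = "\<lambda>z. rep M (z + v)"
  have inj: "inj_on ?h (torus M)"
  proof (rule inj_onI)
    fix a b assume a: "a \<in> torus M" and b: "b \<in> torus M" and "?h a = ?h b"
    then have "tcong M (a + v) (b + v)" by (simp only: rep_eq_iff)
    then have "tcong M a b" by (simp only: tcong_add_iff)
    then show "a = b" using a b by (rule torus_tcong_eq[rotated 2])
  qed
  have "?h ` torus M = torus M"
    by (rule endo_inj_surj) (use inj rep_in_torus assms(2) in auto)
  then have b: "bij_betw ?h (torus M) (torus M)" using inj by (simp add: bij_betw_def)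
  have "(\<Sum>z\<in>torus M. f (z + v)) = (\<Sum>z\<in>torus M. f (?h z))"
    using per_rep[OF assms(1)] by simp
  also have "\<dots> = (\<Sum>z\<in>torus M. f z)" by (rule sum.reindex_bij_betw[OF b])
  finally show ?thesis .
qed

lemma sum_torus_support:
  assumes "per M f" "M > 0" "finite S" "inj_on (rep M) S"
    and "\<And>z. z \<in> torus M \<Longrightarrow> f z \<noteq> 0 \<Longrightarrow> \<exists>y\<in>S. tcong M z y"
  shows "(\<Sum>z\<in>torus M. f z) = (\<Sum>y\<in>S. f y)"
proof -
  have "(\<Sum>y\<in>S. f y) = (\<Sum>y\<in>S. f (rep M y))" using per_rep[OF assms(1)] by simp
  also have "\<dots> = (\<Sum>z\<in>rep M ` S. f z)" using sum.reindex[OF assms(4), of f] by (simp add: o_def)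
  also have "\<dots> = (\<Sum>z\<in>torus M. f z)"
  proof (rule sum.mono_neutral_left)
    show "rep M ` S \<subseteq> torus M" using rep_in_torus assms(2) by auto
    show "\<forall>i\<in>torus M - rep M ` S. f i = 0"
    proof (intro ballI, rule ccontr)
      fix z assume z: "z \<in> torus M - rep M ` S" and "f z \<noteq> 0"
      then obtain y where "y \<in> S" "tcong M z y" using assms(5) by blast
      then have "rep M y = z" using z by (metis DiffD1 rep_eq_iff rep_torus)
      then show False using z \<open>y \<in> S\<close> by auto
    qed
  qed simp
  finally show ?thesis by simp
qed



lemma grad_add: "grad (\<lambda>y. f y + g y) z = grad f z + grad g z"
  by (simp add: grad_def vec_eq_iff algebra_simps)
lemma grad_diff: "grad (\<lambda>y. f y - g y) z = grad f z - grad g z"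
  by (simp add: grad_def vec_eq_iff algebra_simps)
lemma grad_scale: "grad (\<lambda>y. c *\<^sub>R f y) z = c *\<^sub>R grad f z"
  by (simp add: grad_def vec_eq_iff algebra_simps)
lemma grad_zero: "grad (\<lambda>y. 0) z = 0"
  by (simp add: grad_def vec_eq_iff)
lemma grad_sum: "grad (\<lambda>y. \<Sum>i\<in>I. f i y) z = (\<Sum>i\<in>I. grad (f i) z)"
  by (simp add: grad_def vec_eq_iff sum_component sum_subtractf)

lemma grad_per:
  fixes f :: "int^'d \<Rightarrow> real^'m"
  shows "per M f \<Longrightarrow> per M (grad f)"
  unfolding per_def
proof (intro allI)
  fix x :: "int^'d" and j
  assume h: "\<forall>x j. f (x + axis j (int M)) = f x"
  have e1: "f (x + axis j (int M) + axis k 1) = f (x + axis k 1)" for k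
  proof -
    have "x + axis j (int M) + axis k 1 = (x + axis k 1) + axis j (int M)"
      by (simp add: algebra_simps)
    then show ?thesis using h by metis
  qed
  have e2: "f (x + axis j (int M)) = f x" using h by blast
  show "grad f (x + axis j (int M)) = grad f x" by (simp add: grad_def e1 e2)
qed

locale Aform =
  fixes A :: "real^'d^'m \<Rightarrow> real^'d^'m" and c0 :: real
  assumes linA: "linear A"
    and symA: "\<And>F G. inner (A F) G = inner F (A G)"
    and c0pos: "c0 > 0" and coer: "\<And>F. inner (A F) F \<ge> c0 * (norm F)\<^sup>2"
begin

lemma A_add: "A (F + G) = A F + A G" using linA by (simp add: linear_add)
lemma A_diff: "A (F - G) = A F - A G" using linA by (simp add: linear_diff)
lemma A_scale: "A (c *\<^sub>R F) = c *\<^sub>R A F" using linA by (simp add: linear_scale)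
lemma A_zero: "A 0 = 0" using linA by (simp add: linear_0)
lemma A_sum: "A (\<Sum>i\<in>I. F i) = (\<Sum>i\<in>I. A (F i))" using linA by (simp add: linear_sum)

lemma inner_A_sym: "inner (A F) G = inner (A G) F"
  by (metis symA inner_commute)

lemma inner_A_nonneg: "inner (A F) F \<ge> 0"
  using coer[of F] c0pos by (smt (verit) mult_nonneg_nonneg zero_le_power2)

lemma inner_A_zero: "inner (A F) F = 0 \<Longrightarrow> F = 0"
proof -
  assume "inner (A F) F = 0"
  then have "c0 * (norm F)\<^sup>2 \<le> 0" using coer[of F] by simp
  then have "(norm F)\<^sup>2 \<le> 0" using c0pos by (simp add: mult_le_0_iff)
  then show "F = 0" by simp
qed

lemma inner_A_expand:
  "inner (A (F - G)) (F - G) = inner (A F) F - 2 * inner (A G) F + inner (A G) G"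
  using inner_A_sym[of F G] by (simp add: A_diff inner_diff_left inner_diff_right)

abbreviation "e M \<equiv> eform A M"

lemma e_sym: "e M f g = e M g f"
  unfolding eform_def using inner_A_sym by simp

lemma e_add_left: "e M (\<lambda>y. f y + g y) h = e M f h + e M g h"
  unfolding eform_def by (simp add: grad_add A_add inner_add_left sum.distrib)
lemma e_diff_left: "e M (\<lambda>y. f y - g y) h = e M f h - e M g h"
  unfolding eform_def by (simp add: grad_diff A_diff inner_diff_left sum_subtractf)
lemma e_scale_left: "e M (\<lambda>y. c *\<^sub>R f y) h = c * e M f h"
  unfolding eform_def by (simp add: grad_scale A_scale sum_distrib_left)
lemma e_zero_left: "e M (\<lambda>y. 0) h = 0"
  unfolding eform_def by (simp add: grad_zero A_zero)
lemma e_lin_left: "e M (\<lambda>y. \<Sum>i\<in>I. a i *\<^sub>R g i y) h = (\<Sum>i\<in>I. a i * e M (g i) h)"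
  unfolding eform_def
  by (simp add: grad_sum grad_scale A_sum A_scale inner_sum_left sum_distrib_left sum.swap[of _ I])

lemma e_diff_right: "e M h (\<lambda>y. f y - g y) = e M h f - e M h g"
  by (simp add: e_sym[of M h] e_diff_left)
lemma e_lin_right: "e M h (\<lambda>y. \<Sum>i\<in>I. a i *\<^sub>R g i y) = (\<Sum>i\<in>I. a i * e M h (g i))"
  by (simp add: e_sym[of M h] e_lin_left)

lemma e_nonneg: "e M f f \<ge> 0"
  unfolding eform_def by (rule sum_nonneg) (rule inner_A_nonneg)

lemma e_zero_grad: "e M f f = 0 \<Longrightarrow> z \<in> torus M \<Longrightarrow> grad f z = 0"
  unfolding eform_def
  using sum_nonneg_eq_0_iff[OF finite_torus inner_A_nonneg] inner_A_zero by blast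

lemma e_expand: "e M (\<lambda>y. f y - g y) (\<lambda>y. f y - g y) = e M f f - 2 * e M f g + e M g g"
  by (simp add: e_diff_left e_diff_right e_sym[of M g f])

end



definition dl :: "nat \<Rightarrow> int^'d \<Rightarrow> 'm \<Rightarrow> int^'d \<Rightarrow> real^'m" where
  "dl M (z::int^'d) c (y::int^'d) = (if tcong M y z then axis c 1 else 0)"

lemma tcong_shift_axis: "tcong M (y + axis j (int M)) y"
  by (simp add: tcong_def axis_def)

lemma per_dl: "per M (dl M z c)"
  unfolding per_def dl_def
  using tcong_shift_axis tcong_trans tcong_sym by metis

lemma sum_dl:
  fixes z :: "int^'d"
  assumes "M > 0" shows "(\<Sum>w\<in>torus M. dl M z c w) = axis c 1"
proof -
  have "(\<Sum>w\<in>torus M. dl M z c w) = (\<Sum>w\<in>torus M. if w = rep M z then axis c 1 else 0)"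
  proof (rule sum.cong)
    fix w :: "int^'d" assume "w \<in> torus M"
    then have "tcong M w z \<longleftrightarrow> w = rep M z" using rep_eq_iff rep_torus by metis
    then show "dl M z c w = (if w = rep M z then axis c 1 else 0)" by (simp add: dl_def)
  qed simp
  also have "\<dots> = axis c 1" using rep_in_torus[OF assms] by simp
  finally show ?thesis .
qed

lemma per_diff: "per M f \<Longrightarrow> per M g \<Longrightarrow> per M (\<lambda>y. f y - g y)"
  by (simp add: per_def)

lemma per_lin: "(\<And>i. i \<in> I \<Longrightarrow> per M (g i)) \<Longrightarrow> per M (\<lambda>y. \<Sum>i\<in>I. a i *\<^sub>R g i y)"
  by (simp add: per_def)

lemma XN_lin:
  assumes "finite I" "\<And>i. i \<in> I \<Longrightarrow> g i \<in> XN M"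
  shows "(\<lambda>y. \<Sum>i\<in>I. a i *\<^sub>R g i y) \<in> XN M"
proof -
  have "per M (\<lambda>y. \<Sum>i\<in>I. a i *\<^sub>R g i y)"
    by (rule per_lin) (use assms(2) in \<open>auto simp: XN_def periodic_per\<close>)
  moreover have "(\<Sum>w\<in>torus M. \<Sum>i\<in>I. a i *\<^sub>R g i w) = 0"
  proof -
    have "(\<Sum>w\<in>torus M. \<Sum>i\<in>I. a i *\<^sub>R g i w) = (\<Sum>i\<in>I. a i *\<^sub>R (\<Sum>w\<in>torus M. g i w))"
      by (simp add: sum.swap[of _ "torus M"] scaleR_sum_right)
    also have "\<dots> = 0" using assms(2) by (simp add: XN_def)
    finally show ?thesis .
  qed
  ultimately show ?thesis by (simp add: XN_def periodic_per)
qed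

lemma dl_diff_XN:
  assumes "M > 0" shows "(\<lambda>y. dl M z c y - dl M z' c y) \<in> XN M"
  unfolding XN_def periodic_per
  using per_diff[OF per_dl per_dl, of M z c z' c] sum_dl[OF assms, of z c] sum_dl[OF assms, of z' c]
  by (simp add: sum_subtractf)

lemma per_const:
  fixes f :: "int^'d \<Rightarrow> 'b" and y :: "int^'d"
  assumes "per M f" "M > 0" "\<And>z j. z \<in> torus M \<Longrightarrow> f (z + axis j 1) = f z"
  shows "f y = f 0"
proof -
  have h: "f (y + axis j 1) = f y" for y j
  proof -
    have "tcong M (y + axis j 1) (rep M y + axis j 1)" by (rule tcong_add[OF tcong_rep])
    then have "f (y + axis j 1) = f (rep M y + axis j 1)" by (rule per_tcong[OF assms(1)])
    also have "\<dots> = f (rep M y)" using assms(3) rep_in_torus[OF assms(2)] by blast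
    also have "\<dots> = f y" by (rule per_rep[OF assms(1)])
    finally show ?thesis .
  qed
  have "f (0 + (\<chi> i. 1 * y$i)) = f 0" by (rule shift_vec_mult[OF h])
  moreover have "(0::int^'d) + (\<chi> i. 1 * y$i) = y" by (simp add: vec_eq_iff)
  ultimately show ?thesis by simp
qed

lemma XN_zero:
  fixes \<phi> :: "int^'d \<Rightarrow> real^'m"
  assumes "\<phi> \<in> XN M" "M > 0" "\<And>z j. z \<in> torus M \<Longrightarrow> \<phi> (z + axis j 1) = \<phi> z"
  shows "\<phi> = (\<lambda>_. 0)"
proof -
  have per: "per M \<phi>" using assms(1) by (simp add: XN_def periodic_per)
  have c: "\<phi> y = \<phi> 0" for y by (rule per_const[OF per assms(2,3)])
  have "0 = (\<Sum>w\<in>torus M. \<phi> w)" using assms(1) by (simp add: XN_def)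
  also have "\<dots> = (\<Sum>w\<in>(torus M :: (int^'d) set). \<phi> 0)" by (intro sum.cong refl c)
  also have "\<dots> = of_nat (card (torus M :: (int^'d) set)) *\<^sub>R \<phi> 0" by (rule sum_constant_scaleR)
  finally have "of_nat (card (torus M :: (int^'d) set)) *\<^sub>R \<phi> 0 = 0" by simp
  moreover have "card (torus M :: (int^'d) set) \<noteq> 0" using zero_in_torus[OF assms(2)] finite_torus by (metis card_0_eq empty_iff)
  ultimately have "\<phi> 0 = 0" by simp
  then show ?thesis using c by auto
qed

context Aform begin

lemma grad_zero_step: "grad v z = 0 \<Longrightarrow> v (z + axis j 1) = v z"
proof -
  assume "grad v z = 0"
  then have "\<forall>a. (grad v z)$a$j = 0" by simp
  then have "\<forall>a. (v (z + axis j 1))$a = (v z)$a" by (simp add: grad_def)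
  then show ?thesis by (simp add: vec_eq_iff)
qed

lemma e_pd: "v \<in> XN M \<Longrightarrow> M > 0 \<Longrightarrow> e M v v = 0 \<Longrightarrow> v = (\<lambda>_. 0)"
  by (rule XN_zero) (auto intro: grad_zero_step e_zero_grad)

end


definition lcI :: "'i set \<Rightarrow> ('i \<Rightarrow> 'x \<Rightarrow> 'v::real_vector) \<Rightarrow> ('x \<Rightarrow> 'v) set" where
  "lcI I g = {f. \<exists>a. f = (\<lambda>y. \<Sum>i\<in>I. a i *\<^sub>R g i y)}"

lemma lcI_insert:
  assumes "finite I" "i \<notin> I"
  shows "f \<in> lcI (insert i I) g \<longleftrightarrow> (\<exists>h\<in>lcI I g. \<exists>t. f = (\<lambda>y. h y + t *\<^sub>R g i y))"
proof
  assume "f \<in> lcI (insert i I) g"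
  then obtain a where "f = (\<lambda>y. \<Sum>k\<in>insert i I. a k *\<^sub>R g k y)" by (auto simp: lcI_def)
  then have "f = (\<lambda>y. (\<Sum>k\<in>I. a k *\<^sub>R g k y) + a i *\<^sub>R g i y)"
    using assms by (simp add: add.commute)
  then show "\<exists>h\<in>lcI I g. \<exists>t. f = (\<lambda>y. h y + t *\<^sub>R g i y)" by (auto simp: lcI_def)
next
  assume "\<exists>h\<in>lcI I g. \<exists>t. f = (\<lambda>y. h y + t *\<^sub>R g i y)"
  then obtain a t where f: "f = (\<lambda>y. (\<Sum>k\<in>I. a k *\<^sub>R g k y) + t *\<^sub>R g i y)"
    by (auto simp: lcI_def)
  define a' where "a' = a(i := t)"
  have "(\<Sum>k\<in>I. a k *\<^sub>R g k y) = (\<Sum>k\<in>I. a' k *\<^sub>R g k y)" for y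
    using assms(2) by (intro sum.cong) (auto simp: a'_def)
  then have "f = (\<lambda>y. \<Sum>k\<in>insert i I. a' k *\<^sub>R g k y)"
    using assms by (simp add: f a'_def add.commute)
  then show "f \<in> lcI (insert i I) g" by (auto simp: lcI_def)
qed

lemma lcI_lin:
  assumes "h1 \<in> lcI I g" "h2 \<in> lcI I g"
  shows "(\<lambda>y. p *\<^sub>R h1 y + q *\<^sub>R h2 y) \<in> lcI I g"
proof -
  obtain a1 a2 where h: "h1 = (\<lambda>y. \<Sum>i\<in>I. a1 i *\<^sub>R g i y)" "h2 = (\<lambda>y. \<Sum>i\<in>I. a2 i *\<^sub>R g i y)"
    using assms by (auto simp: lcI_def)
  have "(\<lambda>y. p *\<^sub>R h1 y + q *\<^sub>R h2 y) = (\<lambda>y. \<Sum>i\<in>I. (p * a1 i + q * a2 i) *\<^sub>R g i y)"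
    by (simp add: h scaleR_sum_right sum.distrib[symmetric] scaleR_add_left)
  then show ?thesis by (auto simp: lcI_def)
qed

lemma lcI_mono: "finite I \<Longrightarrow> i \<notin> I \<Longrightarrow> h \<in> lcI I g \<Longrightarrow> h \<in> lcI (insert i I) g"
  by (subst lcI_insert) (auto intro!: bexI[of _ h] exI[of _ 0])

lemma lcI_gen: "finite I \<Longrightarrow> i \<notin> I \<Longrightarrow> g i \<in> lcI (insert i I) g"
proof -
  assume a: "finite I" "i \<notin> I"
  have "(\<lambda>y. 0) \<in> lcI I g" by (auto simp: lcI_def intro!: exI[of _ "\<lambda>_. 0"])
  moreover have "g i = (\<lambda>y. 0 + 1 *\<^sub>R g i y)" by simp
  ultimately show ?thesis
    apply (subst lcI_insert[OF a])
    apply (rule bexI[of _ "\<lambda>y. 0"])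
     apply (rule exI[of _ 1])
     apply simp
    apply assumption
    done
qed

lemma proj_exists:
  fixes B :: "('x \<Rightarrow> 'v::real_vector) \<Rightarrow> ('x \<Rightarrow> 'v) \<Rightarrow> real"
  assumes addL: "\<And>f g h. B (\<lambda>y. f y + g y) h = B f h + B g h"
    and scaleL: "\<And>c f h. B (\<lambda>y. c *\<^sub>R f y) h = c * B f h"
    and sym: "\<And>f g. B f g = B g f"
    and fin: "finite I"
    and pd: "\<And>v. v \<in> lcI I g \<Longrightarrow> B v v = 0 \<Longrightarrow> v = (\<lambda>_. 0)"
  shows "\<exists>\<psi>\<in>lcI I g. \<forall>\<eta>\<in>lcI I g. B (\<lambda>y. \<phi> y - \<psi> y) \<eta> = 0"
proof -
  have lin: "B (\<lambda>y. p *\<^sub>R f y + q *\<^sub>R f' y) h = p * B f h + q * B f' h" for p q f f' h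
    using addL scaleL by simp
  have linR: "B h (\<lambda>y. p *\<^sub>R f y + q *\<^sub>R f' y) = p * B h f + q * B h f'" for p q f f' h
    by (simp add: sym[of h] lin)
  show ?thesis using fin pd
  proof (induction I arbitrary: \<phi> rule: finite_induct)
    case empty
    have "(\<lambda>y. 0) \<in> lcI {} g" by (simp add: lcI_def)
    moreover have "lcI {} g = {\<lambda>y. 0}" by (simp add: lcI_def)
    moreover have "B f (\<lambda>y. 0) = 0" for f using linR[of f 0 "\<lambda>y. 0" 0 "\<lambda>y. 0"] by simp
    ultimately show ?case by auto
  next
    case (insert i I)
    have pdI: "\<And>v. v \<in> lcI I g \<Longrightarrow> B v v = 0 \<Longrightarrow> v = (\<lambda>_. 0)"
      using insert.prems lcI_mono[OF insert.hyps(1,2)] by blast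
    obtain \<psi>s where \<psi>s: "\<psi>s \<in> lcI I g" "\<forall>\<eta>\<in>lcI I g. B (\<lambda>y. g i y - \<psi>s y) \<eta> = 0"
      using insert.IH[OF pdI] by blast
    obtain \<psi>' where \<psi>': "\<psi>' \<in> lcI I g" "\<forall>\<eta>\<in>lcI I g. B (\<lambda>y. \<phi> y - \<psi>' y) \<eta> = 0"
      using insert.IH[OF pdI] by blast
    define w where "w = (\<lambda>y. g i y - \<psi>s y)"
    have \<psi>s_ins: "\<psi>s \<in> lcI (insert i I) g" using lcI_mono[OF insert.hyps(1,2) \<psi>s(1)] .
    have gi_ins: "g i \<in> lcI (insert i I) g" using lcI_gen[OF insert.hyps(1,2)] .
    have w_ins: "w \<in> lcI (insert i I) g"
      using lcI_lin[OF gi_ins \<psi>s_ins, of 1 "-1"] by (simp add: w_def)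
    have \<psi>'_ins: "\<psi>' \<in> lcI (insert i I) g" using lcI_mono[OF insert.hyps(1,2) \<psi>'(1)] .
    have decomp: "\<exists>h'\<in>lcI I g. \<exists>t. \<eta> = (\<lambda>y. 1 *\<^sub>R h' y + t *\<^sub>R w y)"
      if "\<eta> \<in> lcI (insert i I) g" for \<eta>
    proof -
      have "\<exists>h\<in>lcI I g. \<exists>t. \<eta> = (\<lambda>y. h y + t *\<^sub>R g i y)"
        using that by (simp only: lcI_insert[OF insert.hyps(1,2)])
      then obtain h t where h: "h \<in> lcI I g" "\<eta> = (\<lambda>y. h y + t *\<^sub>R g i y)"
        by blast
      have "(\<lambda>y. 1 *\<^sub>R h y + t *\<^sub>R \<psi>s y) \<in> lcI I g" by (rule lcI_lin[OF h(1) \<psi>s(1)])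
      moreover have "\<eta> = (\<lambda>y. 1 *\<^sub>R (1 *\<^sub>R h y + t *\<^sub>R \<psi>s y) + t *\<^sub>R w y)"
        by (simp add: h(2) w_def algebra_simps)
      ultimately show ?thesis
        by (intro bexI[of _ "\<lambda>y. 1 *\<^sub>R h y + t *\<^sub>R \<psi>s y"] exI[of _ t]) simp_all
    qed
    show ?case
    proof (cases "B w w = 0")
      case True
      then have w0: "w = (\<lambda>_. 0)" using insert.prems w_ins by blast
      show ?thesis
      proof (intro bexI[OF _ \<psi>'_ins] ballI)
        fix \<eta> assume "\<eta> \<in> lcI (insert i I) g"
        then obtain h' t where "h' \<in> lcI I g" "\<eta> = (\<lambda>y. 1 *\<^sub>R h' y + t *\<^sub>R w y)"
          using decomp by blast
        then show "B (\<lambda>y. \<phi> y - \<psi>' y) \<eta> = 0" using \<psi>'(2) w0 by simp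
      qed
    next
      case False
      define c where "c = B (\<lambda>y. \<phi> y - \<psi>' y) w / B w w"
      define \<psi> where "\<psi> = (\<lambda>y. 1 *\<^sub>R \<psi>' y + c *\<^sub>R w y)"
      have \<psi>_ins: "\<psi> \<in> lcI (insert i I) g" unfolding \<psi>_def by (rule lcI_lin[OF \<psi>'_ins w_ins])
      show ?thesis
      proof (intro bexI[OF _ \<psi>_ins] ballI)
        fix \<eta> assume "\<eta> \<in> lcI (insert i I) g"
        then obtain h' t where h': "h' \<in> lcI I g" and \<eta>: "\<eta> = (\<lambda>y. 1 *\<^sub>R h' y + t *\<^sub>R w y)"
          using decomp by blast
        have r: "(\<lambda>y. \<phi> y - \<psi> y) = (\<lambda>y. 1 *\<^sub>R (\<lambda>y. \<phi> y - \<psi>' y) y + (- c) *\<^sub>R w y)"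
          by (simp add: \<psi>_def algebra_simps)
        have "B (\<lambda>y. \<phi> y - \<psi> y) \<eta>
            = B (\<lambda>y. \<phi> y - \<psi>' y) \<eta> - c * B w \<eta>"
          unfolding r by (subst lin) simp
        also have "B (\<lambda>y. \<phi> y - \<psi>' y) \<eta> = B (\<lambda>y. \<phi> y - \<psi>' y) h' + t * B (\<lambda>y. \<phi> y - \<psi>' y) w"
          unfolding \<eta> by (subst linR) simp
        also have "B w \<eta> = B w h' + t * B w w"
          unfolding \<eta> by (subst linR) simp
        also have "B (\<lambda>y. \<phi> y - \<psi>' y) h' = 0" using \<psi>'(2) h' by blast
        also have "B w h' = 0" using \<psi>s(2) h' by (simp add: w_def)
        finally show "B (\<lambda>y. \<phi> y - \<psi> y) \<eta> = 0" using False by (simp add: c_def)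
      qed
    qed
  qed
qed



lemma vec_axis_sum: "(\<Sum>c\<in>UNIV. (v$c) *\<^sub>R axis c (1::real)) = v"
proof -
  have "(\<Sum>c\<in>UNIV. (v$c) *\<^sub>R axis c (1::real))$i = v$i" for i
  proof -
    have "(\<Sum>c\<in>UNIV. (v$c) *\<^sub>R axis c (1::real))$i = (\<Sum>c\<in>UNIV. if c = i then v$i else 0)"
      unfolding sum_component by (rule sum.cong) (auto simp: axis_def)
    then show ?thesis by simp
  qed
  then show ?thesis by (simp add: vec_eq_iff)
qed

lemma dl_sum_c: "(\<Sum>c\<in>UNIV. (v$c) *\<^sub>R dl M z c y) = (if tcong M y z then v else 0)"
  by (simp add: dl_def vec_axis_sum)

lemma rep_decomp:
  fixes \<psi> :: "int^'d \<Rightarrow> real^'m"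
  assumes "\<psi> \<in> XN M" "M > 0" "R \<subseteq> torus M" "\<And>z. z \<in> torus M - R \<Longrightarrow> \<psi> z = 0"
  shows "\<psi> = (\<lambda>y. \<Sum>p\<in>R \<times> UNIV. (\<psi> (fst p) $ snd p) *\<^sub>R (dl M (fst p) (snd p) y - dl M z0 (snd p) y))"
proof
  fix y
  have per: "per M \<psi>" using assms(1) by (simp add: XN_def periodic_per)
  have fR: "finite R" using finite_subset[OF assms(3) finite_torus] .
  have s1: "(\<Sum>p\<in>R \<times> UNIV. (\<psi> (fst p) $ snd p) *\<^sub>R dl M (fst p) (snd p) y) = \<psi> y"
  proof -
    have "(\<Sum>p\<in>R \<times> UNIV. (\<psi> (fst p) $ snd p) *\<^sub>R dl M (fst p) (snd p) y)
        = (\<Sum>z\<in>R. \<Sum>c\<in>UNIV. (\<psi> z $ c) *\<^sub>R dl M z c y)"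
      by (simp add: sum.cartesian_product case_prod_unfold)
    also have "\<dots> = (\<Sum>z\<in>R. if tcong M y z then \<psi> z else 0)" by (simp add: dl_sum_c)
    also have "\<dots> = (\<Sum>z\<in>R. if z = rep M y then \<psi> z else 0)"
    proof (rule sum.cong)
      fix z assume "z \<in> R"
      then have "z \<in> torus M" using assms(3) by blast
      then have "tcong M y z \<longleftrightarrow> z = rep M y" using rep_eq_iff rep_torus by metis
      then show "(if tcong M y z then \<psi> z else 0) = (if z = rep M y then \<psi> z else 0)" by simp
    qed simp
    also have "\<dots> = (if rep M y \<in> R then \<psi> (rep M y) else 0)" using fR by (simp add: sum.delta')
    also have "\<dots> = \<psi> y"
      using assms(4)[of "rep M y"] rep_in_torus[OF assms(2)] per_rep[OF per] by auto
    finally show ?thesis .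
  qed
  have s2: "(\<Sum>p\<in>R \<times> UNIV. (\<psi> (fst p) $ snd p) *\<^sub>R dl M z0 (snd p) y) = 0"
  proof -
    have "(\<Sum>p\<in>R \<times> UNIV. (\<psi> (fst p) $ snd p) *\<^sub>R dl M z0 (snd p) y)
        = (\<Sum>z\<in>R. \<Sum>c\<in>UNIV. (\<psi> z $ c) *\<^sub>R dl M z0 c y)"
      by (simp add: sum.cartesian_product case_prod_unfold)
    also have "\<dots> = (\<Sum>z\<in>R. if tcong M y z0 then \<psi> z else 0)" by (simp add: dl_sum_c)
    also have "\<dots> = (if tcong M y z0 then (\<Sum>z\<in>R. \<psi> z) else 0)" by simp
    also have "(\<Sum>z\<in>R. \<psi> z) = (\<Sum>z\<in>torus M. \<psi> z)"
      by (rule sum.mono_neutral_left) (use assms(3,4) in auto)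
    also have "\<dots> = 0" using assms(1) by (simp add: XN_def)
    finally show ?thesis by simp
  qed
  show "\<psi> y = (\<Sum>p\<in>R \<times> UNIV. (\<psi> (fst p) $ snd p) *\<^sub>R (dl M (fst p) (snd p) y - dl M z0 (snd p) y))"
    using s1 s2 by (simp add: scaleR_diff_right sum_subtractf)
qed

definition one_v :: "int^'d" where "one_v = (\<chi> i. 1)"

lemma one_v_boxQ: "2 \<le> l \<Longrightarrow> one_v \<in> boxQ l"
  by (simp add: one_v_def boxQ_def)

lemma Vsub_lin:
  assumes "finite I" "\<And>i. i \<in> I \<Longrightarrow> g i \<in> Vsub M l x"
  shows "(\<lambda>y. \<Sum>i\<in>I. a i *\<^sub>R g i y) \<in> Vsub M l x"
proof -
  have "(\<lambda>y. \<Sum>i\<in>I. a i *\<^sub>R g i y) \<in> XN M"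
    by (rule XN_lin[OF assms(1)]) (use assms(2) in \<open>auto simp: Vsub_def\<close>)
  moreover have "(\<Sum>i\<in>I. a i *\<^sub>R g i y) = 0" if "\<not> (\<exists>q\<in>boxQ l. tcong M y (q + x))" for y
    using assms(2) that by (auto simp: Vsub_def intro!: sum.neutral)
  ultimately show ?thesis by (simp add: Vsub_def)
qed

definition Rx :: "nat \<Rightarrow> nat \<Rightarrow> int^'d \<Rightarrow> (int^'d) set" where
  "Rx M l x = {z\<in>torus M. \<exists>q\<in>boxQ l. tcong M z (q + x)}"

definition gen :: "nat \<Rightarrow> int^'d \<Rightarrow> (int^'d) \<times> 'm \<Rightarrow> int^'d \<Rightarrow> real^'m" where
  "gen M x p = (\<lambda>y. dl M (fst p) (snd p) y - dl M (rep M (one_v + x)) (snd p) y)"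

lemma gen_Vsub:
  assumes "M > 0" "2 \<le> l" "p \<in> Rx M l x \<times> UNIV"
  shows "gen M x p \<in> Vsub M l x"
proof -
  have "gen M x p \<in> XN M" unfolding gen_def by (rule dl_diff_XN[OF assms(1)])
  moreover have "gen M x p y = 0" if ny: "\<not> (\<exists>q\<in>boxQ l. tcong M y (q + x))" for y
  proof -
    obtain q where q: "q \<in> boxQ l" "tcong M (fst p) (q + x)" using assms(3) by (auto simp: Rx_def)
    have "\<not> tcong M y (fst p)" using ny q tcong_trans by blast
    moreover have "tcong M (rep M (one_v + x)) (one_v + x)" using tcong_rep tcong_sym by blast
    then have "\<not> tcong M y (rep M (one_v + x))" using ny one_v_boxQ[OF assms(2)] tcong_trans by blast
    ultimately show ?thesis by (simp add: gen_def dl_def)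
  qed
  ultimately show ?thesis by (simp add: Vsub_def)
qed

lemma finite_Rx: "finite (Rx M l x)"
  by (rule finite_subset[OF _ finite_torus[of M]]) (auto simp: Rx_def)

lemma Vsub_lcI:
  assumes "M > 0" "2 \<le> l"
  shows "Vsub M l x = lcI (Rx M l x \<times> UNIV) (gen M x)"
proof
  show "Vsub M l x \<subseteq> lcI (Rx M l x \<times> UNIV) (gen M x)"
  proof
    fix \<psi> assume \<psi>: "\<psi> \<in> Vsub M l x"
    have "\<psi> = (\<lambda>y. \<Sum>p\<in>Rx M l x \<times> UNIV. (\<psi> (fst p) $ snd p) *\<^sub>R
               (dl M (fst p) (snd p) y - dl M (rep M (one_v + x)) (snd p) y))"
    proof (rule rep_decomp)
      show "\<psi> \<in> XN M" using \<psi> by (simp add: Vsub_def)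
      show "Rx M l x \<subseteq> torus M" by (auto simp: Rx_def)
      show "\<psi> z = 0" if "z \<in> torus M - Rx M l x" for z
        using that \<psi> by (auto simp: Rx_def Vsub_def)
    qed fact
    then have "\<psi> = (\<lambda>y. \<Sum>p\<in>Rx M l x \<times> UNIV. (\<psi> (fst p) $ snd p) *\<^sub>R gen M x p y)"
      by (simp add: gen_def)
    then show "\<psi> \<in> lcI (Rx M l x \<times> UNIV) (gen M x)" by (auto simp: lcI_def)
  qed
next
  show "lcI (Rx M l x \<times> UNIV) (gen M x) \<subseteq> Vsub M l x"
  proof
    fix f assume "f \<in> lcI (Rx M l x \<times> UNIV) (gen M x)"
    then obtain a where f: "f = (\<lambda>y. \<Sum>p\<in>Rx M l x \<times> UNIV. a p *\<^sub>R gen M x p y)"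
      by (auto simp: lcI_def)
    show "f \<in> Vsub M l x" unfolding f
      by (rule Vsub_lin[OF finite_cartesian_product[OF finite_Rx finite_class.finite_UNIV]])
         (rule gen_Vsub[OF assms])
  qed
qed

context Aform begin

lemma Pi_char:
  assumes "M > 0" "2 \<le> l"
  shows "Pi A M l x \<phi> \<in> Vsub M l x \<and> (\<forall>\<eta>\<in>Vsub M l x. e M (\<lambda>y. \<phi> y - Pi A M l x \<phi> y) \<eta> = 0)"
proof -
  let ?V = "Vsub M l x"
  let ?P = "\<lambda>\<psi>. \<psi> \<in> ?V \<and> (\<forall>\<eta>\<in>?V. e M (\<lambda>y. \<phi> y - \<psi> y) \<eta> = 0)"
  have ex: "\<exists>\<psi>. ?P \<psi>"
  proof -
    have "\<exists>\<psi>\<in>lcI (Rx M l x \<times> UNIV) (gen M x). \<forall>\<eta>\<in>lcI (Rx M l x \<times> UNIV) (gen M x).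
             e M (\<lambda>y. \<phi> y - \<psi> y) \<eta> = 0"
    proof (rule proj_exists)
      show "finite (Rx M l x \<times> (UNIV::'m set))" by (simp add: finite_Rx)
      show "v = (\<lambda>_. 0)" if "v \<in> lcI (Rx M l x \<times> UNIV) (gen M x)" "e M v v = 0" for v
        using that e_pd[OF _ assms(1)] Vsub_lcI[OF assms] by (auto simp: Vsub_def)
    qed (simp_all add: e_add_left e_scale_left e_sym[of M])
    then show ?thesis using Vsub_lcI[OF assms] by auto
  qed
  have uniq: "\<psi>1 = \<psi>2" if "?P \<psi>1" "?P \<psi>2" for \<psi>1 \<psi>2
  proof -
    define d where "d = (\<lambda>y. \<psi>1 y - \<psi>2 y)"
    have "(\<lambda>y. 1 *\<^sub>R \<psi>1 y + (-1) *\<^sub>R \<psi>2 y) \<in> lcI (Rx M l x \<times> UNIV) (gen M x)"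
      using that Vsub_lcI[OF assms] by (intro lcI_lin) auto
    then have dV: "d \<in> ?V" by (simp add: d_def Vsub_lcI[OF assms])
    have deq: "d = (\<lambda>y. (\<phi> y - \<psi>2 y) - (\<phi> y - \<psi>1 y))" by (simp add: d_def)
    have "e M d d = e M (\<lambda>y. (\<phi> y - \<psi>2 y) - (\<phi> y - \<psi>1 y)) d"
      by (rule arg_cong[where f="\<lambda>u. e M u d"], rule deq)
    also have "\<dots> = e M (\<lambda>y. \<phi> y - \<psi>2 y) d - e M (\<lambda>y. \<phi> y - \<psi>1 y) d"
      by (rule e_diff_left)
    also have "\<dots> = 0" using that dV by simp
    finally have "d = (\<lambda>_. 0)" using e_pd[OF _ assms(1)] dV by (auto simp: Vsub_def)
    then show ?thesis unfolding d_def by (metis (no_types, lifting) ext eq_iff_diff_eq_0)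
  qed
  have "\<exists>!\<psi>. ?P \<psi>" using ex uniq by blast
  then have "?P (THE \<psi>. ?P \<psi>)" by (rule theI')
  then show ?thesis unfolding Pi_def .
qed

end


lemma boxQm_tcong_eq:
  assumes "q1 \<in> boxQm l" "q2 \<in> boxQm l" "l \<le> M" "tcong M q1 q2"
  shows "q1 = q2"
proof -
  have "q1$i = q2$i" for i
  proof -
    have lM: "int l \<le> int M" using assms(3) by simp
    have b: "0 \<le> q1$i" "q1$i \<le> int l - 1" "0 \<le> q2$i" "q2$i \<le> int l - 1"
      using assms(1,2) by (simp_all add: boxQm_def)
    then have "0 \<le> q1$i" "q1$i < int M" "0 \<le> q2$i" "q2$i < int M" using lM by linarith+
    moreover have "q1$i mod int M = q2$i mod int M" using assms(4) by (simp add: tcong_def)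
    ultimately show ?thesis by (simp add: mod_pos_pos_trivial)
  qed
  then show ?thesis by (simp add: vec_eq_iff)
qed

lemma inj_rep_S:
  assumes "l \<le> M"
  shows "inj_on (rep M) ((\<lambda>q. q + x) ` boxQm l)"
  using boxQm_tcong_eq[OF _ _ assms] by (auto simp: inj_on_def rep_eq_iff tcong_add_iff)

lemma inj_shift: "inj_on (\<lambda>q. q + x) (S::(int^'d) set)"
  by (auto simp: inj_on_def)

lemma Vsub_support: "\<psi> \<in> Vsub M l x \<Longrightarrow> \<psi> z \<noteq> 0 \<Longrightarrow> \<exists>q\<in>boxQ l. tcong M z (q + x)"
  by (auto simp: Vsub_def)

lemma grad_support:
  assumes "\<psi> \<in> Vsub M l x" "grad \<psi> z \<noteq> 0"
  shows "\<exists>q\<in>boxQm l. tcong M z (q + x)"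
proof -
  obtain a j where "(grad \<psi> z)$a$j \<noteq> 0" using assms(2) by (metis vec_eq_iff zero_index)
  then have "\<psi> (z + axis j 1) \<noteq> \<psi> z" by (auto simp: grad_def)
  then consider "\<psi> z \<noteq> 0" | "\<psi> (z + axis j 1) \<noteq> 0" by fastforce
  then show ?thesis
  proof cases
    case 1
    then obtain q where "q \<in> boxQ l" "tcong M z (q + x)" using Vsub_support[OF assms(1)] by blast
    moreover have "q \<in> boxQm l"
    proof -
      have qb: "1 \<le> q$i \<and> q$i \<le> int l - 1" for i using \<open>q \<in> boxQ l\<close> by (simp add: boxQ_def)
      have "0 \<le> q$i \<and> q$i \<le> int l - 1" for i using qb[of i] by linarith
      then show ?thesis by (simp add: boxQm_def)
    qed
    ultimately show ?thesis by blast
  next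
    case 2
    then obtain q where q: "q \<in> boxQ l" "tcong M (z + axis j 1) (q + x)" using Vsub_support[OF assms(1)] by blast
    have "q + x = (q - axis j 1 + x) + axis j 1" by simp
    then have "tcong M z (q - axis j 1 + x)" using q(2) tcong_add_iff by metis
    moreover have "q - axis j 1 \<in> boxQm l"
    proof -
      have qb: "1 \<le> q$i \<and> q$i \<le> int l - 1" for i using q(1) by (simp add: boxQ_def)
      have "0 \<le> (q - axis j 1)$i \<and> (q - axis j 1)$i \<le> int l - 1" for i
        using qb[of i] by (auto simp: axis_def)
      then show ?thesis by (simp add: boxQm_def)
    qed
    ultimately show ?thesis by blast
  qed
qed

context Aform begin

lemma per_inner: "per M f \<Longrightarrow> per M g \<Longrightarrow> per M (\<lambda>z. inner (A (grad f z)) (grad g z))"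
  using grad_per[of M f] grad_per[of M g] by (simp add: per_def)

lemma e_support:
  assumes "\<psi> \<in> Vsub M l x" "per M h" "M > 0" "l \<le> M"
  shows "e M \<psi> h = (\<Sum>y\<in>(\<lambda>q. q + x) ` boxQm l. inner (A (grad \<psi> y)) (grad h y))"
  unfolding eform_def
proof (rule sum_torus_support)
  show "per M (\<lambda>z. inner (A (grad \<psi> z)) (grad h z))"
    using assms(1,2) by (intro per_inner) (auto simp: Vsub_def XN_def periodic_per)
  show "\<exists>y\<in>(\<lambda>q. q + x) ` boxQm l. tcong M z y"
    if "z \<in> torus M" "inner (A (grad \<psi> z)) (grad h z) \<noteq> 0" for z
  proof -
    have "grad \<psi> z \<noteq> 0" using that(2) A_zero by auto
    then show ?thesis using grad_support[OF assms(1)] by blast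
  qed
qed (use assms inj_rep_S in auto)

abbreviation "ES M l x \<phi> \<equiv> (\<Sum>y\<in>(\<lambda>q. q + x) ` boxQm l. inner (A (grad \<phi> y)) (grad \<phi> y))"

lemma part_i:
  fixes x :: "int^'d" and \<phi> :: "int^'d \<Rightarrow> real^'m"
  assumes "M > 0" "2 \<le> l" "l \<le> M" "\<phi> \<in> XN M"
  defines "P \<equiv> Pi A M l x \<phi>"
  shows "e M P \<phi> = e M P P" "0 \<le> e M P \<phi>"
    "(\<Sum>y\<in>(\<lambda>q. q + x) ` boxQm l. inner (A (grad \<phi> y - grad P y)) (grad \<phi> y - grad P y))
       = ES M l x \<phi> - e M P \<phi>"
    "e M P \<phi> \<le> ES M l x \<phi>"
proof -
  note PC = Pi_char[OF assms(1,2), of x \<phi>, folded P_def]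
  have PV: "P \<in> Vsub M l x" using PC by (rule conjunct1)
  have orth: "\<forall>\<eta>\<in>Vsub M l x. e M (\<lambda>y. \<phi> y - P y) \<eta> = 0" using PC by (rule conjunct2)
  have perP: "per M P" using PV by (simp add: Vsub_def XN_def periodic_per)
  have perphi: "per M \<phi>" using assms(4) by (simp add: XN_def periodic_per)
  have "e M (\<lambda>y. \<phi> y - P y) P = 0" using orth PV by (rule bspec)
  then have "e M \<phi> P - e M P P = 0" by (simp only: e_diff_left)
  then have "e M \<phi> P = e M P P" by simp
  then show a: "e M P \<phi> = e M P P" by (simp add: e_sym)
  then show b: "0 \<le> e M P \<phi>" using e_nonneg by simp
  let ?S = "(\<lambda>q. q + x) ` boxQm l"
  have "(\<Sum>y\<in>?S. inner (A (grad \<phi> y - grad P y)) (grad \<phi> y - grad P y))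
     = ES M l x \<phi> - 2 * (\<Sum>y\<in>?S. inner (A (grad P y)) (grad \<phi> y))
       + (\<Sum>y\<in>?S. inner (A (grad P y)) (grad P y))"
    by (simp add: inner_A_expand sum_subtractf sum.distrib sum_distrib_left)
  also have "(\<Sum>y\<in>?S. inner (A (grad P y)) (grad \<phi> y)) = e M P \<phi>"
    using e_support[OF PV perphi assms(1,3)] by simp
  also have "(\<Sum>y\<in>?S. inner (A (grad P y)) (grad P y)) = e M P P"
    using e_support[OF PV perP assms(1,3)] by simp
  finally show c: "(\<Sum>y\<in>?S. inner (A (grad \<phi> y - grad P y)) (grad \<phi> y - grad P y))
       = ES M l x \<phi> - e M P \<phi>" using a by simp
  have "0 \<le> (\<Sum>y\<in>?S. inner (A (grad \<phi> y - grad P y)) (grad \<phi> y - grad P y))"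
    by (rule sum_nonneg) (rule inner_A_nonneg)
  then show "e M P \<phi> \<le> ES M l x \<phi>" using c by simp
qed

lemma Top_eq: "Top A M l \<psi> = (\<lambda>y. \<Sum>x\<in>torus M. (1 / real l ^ CARD('d)) *\<^sub>R Pi A M l x \<psi> y)"
  by (simp add: Top_def scaleR_sum_right)

lemma e_Top_left:
  "e M (Top A M l \<psi>) h = (1 / real l ^ CARD('d)) * (\<Sum>x\<in>torus M. e M (Pi A M l x \<psi>) h)"
  unfolding Top_eq by (simp add: e_lin_left sum_distrib_left)

lemma sum_ES:
  fixes \<psi> :: "int^'d \<Rightarrow> real^'m"
  assumes "M > 0" "\<psi> \<in> XN M"
  shows "(\<Sum>x\<in>torus M. ES M l x \<psi>) = real l ^ CARD('d) * e M \<psi> \<psi>"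
proof -
  have per: "per M (\<lambda>z. inner (A (grad \<psi> z)) (grad \<psi> z))"
    using assms(2) by (intro per_inner) (auto simp: XN_def periodic_per)
  have "(\<Sum>x\<in>torus M. ES M l x \<psi>)
      = (\<Sum>x\<in>torus M. \<Sum>q\<in>boxQm l. inner (A (grad \<psi> (q + x))) (grad \<psi> (q + x)))"
    by (simp add: sum.reindex[OF inj_shift])
  also have "\<dots> = (\<Sum>q\<in>boxQm l. \<Sum>x\<in>torus M. inner (A (grad \<psi> (x + q))) (grad \<psi> (x + q)))"
    by (subst sum.swap) (simp add: add.commute)
  also have "\<dots> = (\<Sum>q\<in>(boxQm l :: (int^'d) set). e M \<psi> \<psi>)"
    unfolding eform_def using sum_torus_shift[OF per assms(1)] by simp
  also have "\<dots> = real l ^ CARD('d) * e M \<psi> \<psi>" by (simp add: card_boxQm)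
  finally show ?thesis .
qed

lemma part_ii:
  fixes \<psi> :: "int^'d \<Rightarrow> real^'m"
  assumes "M > 0" "2 \<le> l" "l \<le> M" "\<psi> \<in> XN M"
  shows "0 \<le> e M (Top A M l \<psi>) \<psi>" "e M (Top A M l \<psi>) \<psi> \<le> e M \<psi> \<psi>"
proof -
  have lpos: "real l ^ CARD('d) > 0" using assms(2) by simp
  have "0 \<le> (\<Sum>x\<in>torus M. e M (Pi A M l x \<psi>) \<psi>)"
    by (rule sum_nonneg) (rule part_i(2)[OF assms])
  then show "0 \<le> e M (Top A M l \<psi>) \<psi>" unfolding e_Top_left using lpos by simp
  have "(\<Sum>x\<in>torus M. e M (Pi A M l x \<psi>) \<psi>) \<le> (\<Sum>x\<in>torus M. ES M l x \<psi>)"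
    by (rule sum_mono) (rule part_i(4)[OF assms])
  also have "\<dots> = real l ^ CARD('d) * e M \<psi> \<psi>" by (rule sum_ES[OF assms(1,4)])
  finally show "e M (Top A M l \<psi>) \<psi> \<le> e M \<psi> \<psi>" unfolding e_Top_left using lpos
    by (simp add: field_simps)
qed

end


lemma boxQ_mod_nonzero:
  assumes "q \<in> boxQ l" "l \<le> M" shows "q$k mod int M \<noteq> 0"
proof -
  have "1 \<le> q$k" "q$k \<le> int l - 1" using assms(1) by (simp_all add: boxQ_def)
  moreover have "int l \<le> int M" using assms(2) by simp
  ultimately have "q$k mod int M = q$k" by (simp add: mod_pos_pos_trivial)
  then show ?thesis using \<open>1 \<le> q$k\<close> by simp
qed

lemma one_v_axis_boxQ: "3 \<le> l \<Longrightarrow> one_v + axis j 1 \<in> boxQ l"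
  by (auto simp: one_v_def boxQ_def axis_def)

context Aform begin

lemma Pi_XN:
  assumes "M > 0" "2 \<le> l" shows "Pi A M l x \<phi> \<in> XN M"
  using Pi_char[OF assms] by (simp add: Vsub_def)

lemma Top_XN:
  fixes \<psi> :: "int^'d \<Rightarrow> real^'m"
  assumes "M > 0" "2 \<le> l" shows "Top A M l \<psi> \<in> XN M"
  unfolding Top_eq by (rule XN_lin[OF finite_torus]) (rule Pi_XN[OF assms])

lemma strict_lower:
  fixes \<phi> :: "int^'d \<Rightarrow> real^'m"
  assumes M: "M > 0" and l3: "3 \<le> l" and lM: "l \<le> M" and phi: "\<phi> \<in> XN M"
    and nz: "\<phi> \<noteq> (\<lambda>_. 0)"
  shows "0 < e M (Top A M l \<phi>) \<phi>"
proof (rule ccontr)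
  assume "\<not> 0 < e M (Top A M l \<phi>) \<phi>"
  have l2: "2 \<le> l" using l3 by simp
  have lpos: "real l ^ CARD('d) > 0" using l2 by simp
  have "e M (Top A M l \<phi>) \<phi> = 0"
    using part_ii(1)[OF M l2 lM phi] \<open>\<not> 0 < _\<close> by simp
  then have "(\<Sum>x\<in>torus M. e M (Pi A M l x \<phi>) \<phi>) = 0"
    unfolding e_Top_left using lpos by simp
  moreover have "(\<Sum>x\<in>torus M. e M (Pi A M l x \<phi>) \<phi>) = 0 \<longleftrightarrow> (\<forall>x\<in>torus M. e M (Pi A M l x \<phi>) \<phi> = 0)"
    by (rule sum_nonneg_eq_0_iff[OF finite_torus]) (rule part_i(2)[OF M l2 lM phi])
  ultimately have z: "e M (Pi A M l x \<phi>) \<phi> = 0" if "x \<in> torus M" for x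
    using that by blast
  have orth0: "e M \<phi> \<eta> = 0" if "x \<in> torus M" "\<eta> \<in> Vsub M l x" for x \<eta>
  proof -
    have "e M (Pi A M l x \<phi>) (Pi A M l x \<phi>) = 0" using z[OF that(1)] part_i(1)[OF M l2 lM phi] by simp
    then have "Pi A M l x \<phi> = (\<lambda>_. 0)" using e_pd[OF Pi_XN[OF M l2] M] by blast
    moreover have "e M (\<lambda>y. \<phi> y - Pi A M l x \<phi> y) \<eta> = 0" using Pi_char[OF M l2] that(2) by blast
    ultimately show ?thesis by simp
  qed
  define h where "h c z = e M \<phi> (dl M z c)" for c z
  have hstep: "h c (a + axis j 1) = h c a" for c a j
  proof -
    define x where "x = rep M (a - one_v)"
    have xt: "x \<in> torus M" unfolding x_def by (rule rep_in_torus[OF M])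
    have cx: "tcong M (q + x) (q + (a - one_v))" for q
      unfolding x_def using tcong_add[OF tcong_sym[OF tcong_rep], of M "a - one_v" q] by (simp add: add.commute)
    have "(\<lambda>y. dl M (a + axis j 1) c y - dl M a c y) \<in> Vsub M l x"
    proof -
      have "(\<lambda>y. dl M (a + axis j 1) c y - dl M a c y) \<in> XN M" by (rule dl_diff_XN[OF M])
      moreover have "dl M (a + axis j 1) c y - dl M a c y = 0" if ny: "\<not> (\<exists>q\<in>boxQ l. tcong M y (q + x))" for y
      proof -
        have "tcong M (one_v + axis j 1 + x) (a + axis j 1)"
          using cx[of "one_v + axis j 1"] by (simp add: algebra_simps)
        then have "\<not> tcong M y (a + axis j 1)"
          using ny one_v_axis_boxQ[OF l3] tcong_trans tcong_sym by blast
        moreover have "tcong M (one_v + x) a" using cx[of one_v] by (simp add: algebra_simps)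
        then have "\<not> tcong M y a"
          using ny one_v_boxQ[OF l2] tcong_trans tcong_sym by blast
        ultimately show ?thesis by (simp add: dl_def)
      qed
      ultimately show ?thesis by (simp add: Vsub_def)
    qed
    then have "e M \<phi> (\<lambda>y. dl M (a + axis j 1) c y - dl M a c y) = 0" by (rule orth0[OF xt])
    then show ?thesis by (simp add: h_def e_diff_right)
  qed
  have hconst: "h c z = h c 0" for c z
  proof -
    have "h c (0 + (\<chi> i. 1 * z$i)) = h c 0" by (rule shift_vec_mult) (rule hstep)
    moreover have "(0::int^'d) + (\<chi> i. 1 * z$i) = z" by (simp add: vec_eq_iff)
    ultimately show ?thesis by simp
  qed
  have phi_eq: "\<phi> = (\<lambda>y. \<Sum>p\<in>torus M \<times> UNIV. (\<phi> (fst p) $ snd p) *\<^sub>R (dl M (fst p) (snd p) y - dl M 0 (snd p) y))"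
    by (rule rep_decomp[OF phi M]) auto
  have "e M \<phi> \<phi> = e M \<phi> (\<lambda>y. \<Sum>p\<in>torus M \<times> UNIV. (\<phi> (fst p) $ snd p) *\<^sub>R (dl M (fst p) (snd p) y - dl M 0 (snd p) y))"
    using arg_cong[where f="e M \<phi>", OF phi_eq] .
  also have "\<dots> = (\<Sum>p\<in>torus M \<times> UNIV. (\<phi> (fst p) $ snd p) * e M \<phi> (\<lambda>y. dl M (fst p) (snd p) y - dl M 0 (snd p) y))"
    by (rule e_lin_right)
  also have "\<dots> = 0"
  proof (rule sum.neutral, rule ballI)
    fix p :: "(int^'d) \<times> 'm"
    have "e M \<phi> (\<lambda>y. dl M (fst p) (snd p) y - dl M 0 (snd p) y) = h (snd p) (fst p) - h (snd p) 0"
      by (simp add: h_def e_diff_right)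
    then show "(\<phi> (fst p) $ snd p) * e M \<phi> (\<lambda>y. dl M (fst p) (snd p) y - dl M 0 (snd p) y) = 0"
      using hconst by simp
  qed
  finally have "\<phi> = (\<lambda>_. 0)" using e_pd[OF phi M] by blast
  then show False using nz by blast
qed

lemma strict_upper:
  fixes \<phi> :: "int^'d \<Rightarrow> real^'m"
  assumes M: "M > 0" and l2: "2 \<le> l" and lM: "l \<le> M" and phi: "\<phi> \<in> XN M"
    and nz: "\<phi> \<noteq> (\<lambda>_. 0)" and d2: "CARD('d) \<ge> 2"
  shows "e M (Top A M l \<phi>) \<phi> < e M \<phi> \<phi>"
proof (rule ccontr)
  assume "\<not> e M (Top A M l \<phi>) \<phi> < e M \<phi> \<phi>"
  then have eq: "e M (Top A M l \<phi>) \<phi> = e M \<phi> \<phi>" using part_ii(2)[OF M l2 lM phi] by simp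
  have lpos: "real l ^ CARD('d) > 0" using l2 by simp
  have "(\<Sum>x\<in>torus M. e M (Pi A M l x \<phi>) \<phi>) = (\<Sum>x\<in>torus M. ES M l x \<phi>)"
    using eq unfolding e_Top_left sum_ES[OF M phi] using lpos by (simp add: field_simps)
  then have "(\<Sum>x\<in>torus M. ES M l x \<phi> - e M (Pi A M l x \<phi>) \<phi>) = 0" by (simp add: sum_subtractf)
  moreover have "(\<Sum>x\<in>torus M. ES M l x \<phi> - e M (Pi A M l x \<phi>) \<phi>) = 0 \<longleftrightarrow>
      (\<forall>x\<in>torus M. ES M l x \<phi> - e M (Pi A M l x \<phi>) \<phi> = 0)"
    by (rule sum_nonneg_eq_0_iff[OF finite_torus]) (use part_i(4)[OF M l2 lM phi] in simp)
  ultimately have z: "ES M l x \<phi> - e M (Pi A M l x \<phi>) \<phi> = 0" if "x \<in> torus M" for x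
    using that by blast
  have step: "\<phi> (x + axis j 1) = \<phi> x" if xt: "x \<in> torus M" for x j
  proof -
    let ?P = "Pi A M l x \<phi>"
    let ?S = "(\<lambda>q. q + x) ` boxQm l"
    have PV: "?P \<in> Vsub M l x" using Pi_char[OF M l2] by blast
    have "(\<Sum>y\<in>?S. inner (A (grad \<phi> y - grad ?P y)) (grad \<phi> y - grad ?P y)) = 0"
      using part_i(3)[OF M l2 lM phi, of x] z[OF xt] by simp
    moreover have "x \<in> ?S"
    proof
      show "x = 0 + x" by simp
      show "(0::int^'d) \<in> boxQm l" using l2 by (simp add: boxQm_def)
    qed
    moreover have "(\<Sum>y\<in>?S. inner (A (grad \<phi> y - grad ?P y)) (grad \<phi> y - grad ?P y)) = 0
        \<longleftrightarrow> (\<forall>y\<in>?S. inner (A (grad \<phi> y - grad ?P y)) (grad \<phi> y - grad ?P y) = 0)"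
      by (rule sum_nonneg_eq_0_iff) (simp_all add: inner_A_nonneg)
    ultimately have "inner (A (grad \<phi> x - grad ?P x)) (grad \<phi> x - grad ?P x) = 0"
      by blast
    then have "grad \<phi> x - grad ?P x = 0" by (rule inner_A_zero)
    then have gx: "grad \<phi> x = grad ?P x" by simp
    have P0: "?P x = 0"
    proof (rule ccontr)
      assume "?P x \<noteq> 0"
      then obtain q where q: "q \<in> boxQ l" "tcong M x (q + x)" using Vsub_support[OF PV] by blast
      have "tcong M (0 + x) (q + x)" using q(2) by simp
      then have "tcong M 0 q" by (simp only: tcong_add_iff)
      then have "q$i mod int M = 0" for i by (simp add: tcong_def)
      then show False using boxQ_mod_nonzero[OF q(1) lM] by blast
    qed
    obtain k :: 'd where kj: "k \<noteq> j"
    proof -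
      have "\<exists>k::'d. k \<noteq> j"
      proof (rule ccontr)
        assume "\<not> (\<exists>k::'d. k \<noteq> j)"
        then have "(UNIV :: 'd set) = {j}" by auto
        then have "card (UNIV :: 'd set) = card {j}" by (rule arg_cong)
        then show False using d2 by simp
      qed
      then show ?thesis using that by blast
    qed
    have P1: "?P (x + axis j 1) = 0"
    proof (rule ccontr)
      assume "?P (x + axis j 1) \<noteq> 0"
      then obtain q where q: "q \<in> boxQ l" "tcong M (x + axis j 1) (q + x)" using Vsub_support[OF PV] by blast
      have "tcong M (axis j 1 + x) (q + x)" using q(2) by (simp add: add.commute)
      then have "tcong M (axis j 1) q" by (simp only: tcong_add_iff)
      then have "(axis j 1 :: int^'d)$k mod int M = q$k mod int M" by (simp add: tcong_def)
      then have "q$k mod int M = 0" using kj by (simp add: axis_def)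
      then show False using boxQ_mod_nonzero[OF q(1) lM, of k] by simp
    qed
    have "(grad \<phi> x)$a$j = 0" for a using gx P0 P1 by (simp add: grad_def)
    then have "(\<phi> (x + axis j 1))$a = (\<phi> x)$a" for a by (simp add: grad_def)
    then show ?thesis by (simp add: vec_eq_iff)
  qed
  have "\<phi> = (\<lambda>_. 0)" by (rule XN_zero[OF phi M step])
  then show False using nz by blast
qed

lemma part_iii:
  fixes \<phi> :: "int^'d \<Rightarrow> real^'m"
  assumes M: "M > 0" and l2: "2 \<le> l" and lM: "l \<le> M" and phi: "\<phi> \<in> XN M"
  shows "e M (Top A M l \<phi>) (Top A M l \<phi>) \<le> e M (Top A M l \<phi>) \<phi>"
proof -
  let ?T = "Top A M l \<phi>"
  have TX: "?T \<in> XN M" by (rule Top_XN[OF M l2])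
  have lpos: "real l ^ CARD('d) > 0" using l2 by simp
  have bound: "e M (Pi A M l x \<phi>) ?T \<le> (e M (Pi A M l x \<phi>) \<phi> + e M (Pi A M l x ?T) ?T) / 2" for x
  proof -
    let ?a = "Pi A M l x \<phi>" and ?b = "Pi A M l x ?T"
    have aV: "?a \<in> Vsub M l x" using Pi_char[OF M l2] by blast
    have "e M (\<lambda>y. ?T y - ?b y) ?a = 0" using Pi_char[OF M l2, of x ?T] aV by blast
    then have "e M ?T ?a = e M ?b ?a" by (simp add: e_diff_left)
    then have ab: "e M ?a ?T = e M ?a ?b" by (simp add: e_sym)
    have "0 \<le> e M (\<lambda>y. ?a y - ?b y) (\<lambda>y. ?a y - ?b y)" by (rule e_nonneg)
    then have "0 \<le> e M ?a ?a - 2 * e M ?a ?b + e M ?b ?b" by (simp only: e_expand)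
    moreover have "e M ?a ?a = e M ?a \<phi>" using part_i(1)[OF M l2 lM phi, of x] by simp
    moreover have "e M ?b ?b = e M ?b ?T" using part_i(1)[OF M l2 lM TX, of x] by simp
    ultimately show ?thesis using ab by simp
  qed
  have "e M ?T ?T = (1 / real l ^ CARD('d)) * (\<Sum>x\<in>torus M. e M (Pi A M l x \<phi>) ?T)"
    by (rule e_Top_left)
  also have "\<dots> \<le> (1 / real l ^ CARD('d)) * (\<Sum>x\<in>torus M. (e M (Pi A M l x \<phi>) \<phi> + e M (Pi A M l x ?T) ?T) / 2)"
    using lpos by (intro mult_left_mono sum_mono bound) simp_all
  also have "\<dots> = (1 / real l ^ CARD('d)) * (((\<Sum>x\<in>torus M. e M (Pi A M l x \<phi>) \<phi>)
        + (\<Sum>x\<in>torus M. e M (Pi A M l x ?T) ?T)) / 2)"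
    by (simp add: sum_divide_distrib[symmetric] sum.distrib)
  also have "\<dots> = ((1 / real l ^ CARD('d)) * (\<Sum>x\<in>torus M. e M (Pi A M l x \<phi>) \<phi>)
        + (1 / real l ^ CARD('d)) * (\<Sum>x\<in>torus M. e M (Pi A M l x ?T) ?T)) / 2"
    by (simp add: distrib_left)
  also have "\<dots> = (e M ?T \<phi> + e M (Top A M l ?T) ?T) / 2"
    by (simp only: e_Top_left)
  also have "\<dots> \<le> (e M ?T \<phi> + e M ?T ?T) / 2"
    using part_ii(2)[OF M l2 lM TX] by simp
  finally show ?thesis by simp
qed

end
theorem lemma3p4:
  fixes A :: "real^'d^'m \<Rightarrow> real^'d^'m"
    and L N l :: nat and c0 :: real
    and \<phi> :: "int^'d \<Rightarrow> real^'m" and x :: "int^'d"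
  assumes "CARD('d) \<ge> 2"
    and "L \<ge> 3" and "odd L" and "N \<ge> 1"
    and "l \<ge> 3" and "l - 1 < L ^ N"
    and "linear A"
    and "\<And>F G. inner (A F) G = inner F (A G)"
    and "c0 > 0" and "\<And>F. inner (A F) F \<ge> c0 * (norm F)\<^sup>2"
    and "\<phi> \<in> XN (L ^ N)" and "x \<in> torus (L ^ N)"
  shows "(0 \<le> eform A (L ^ N) (Pi A (L ^ N) l x \<phi>) \<phi>
         \<and> eform A (L ^ N) (Pi A (L ^ N) l x \<phi>) \<phi>
             \<le> (\<Sum>y\<in>(\<lambda>q. q + x) ` boxQm l. inner (A (grad \<phi> y)) (grad \<phi> y)))
    \<and> (0 \<le> eform A (L ^ N) (Top A (L ^ N) l \<phi>) \<phi>
         \<and> eform A (L ^ N) (Top A (L ^ N) l \<phi>) \<phi> \<le> eform A (L ^ N) \<phi> \<phi>)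
    \<and> (\<phi> \<noteq> (\<lambda>_. 0) \<longrightarrow> 0 < eform A (L ^ N) (Top A (L ^ N) l \<phi>) \<phi>
         \<and> eform A (L ^ N) (Top A (L ^ N) l \<phi>) \<phi> < eform A (L ^ N) \<phi> \<phi>)
    \<and> (eform A (L ^ N) (Top A (L ^ N) l \<phi>) (Top A (L ^ N) l \<phi>)
         \<le> eform A (L ^ N) (Top A (L ^ N) l \<phi>) \<phi>)"
proof -
  interpret Aform A c0 using assms(7-10) by (simp add: Aform_def)
  have M: "L ^ N > 0" using assms(2) by simp
  have l2: "2 \<le> l" and l3: "3 \<le> l" using assms(5) by simp_all
  have lM: "l \<le> L ^ N" using assms(5,6) by linarith
  note phi = assms(11)
  show ?thesis
  proof (intro conjI impI)
    show "0 \<le> eform A (L ^ N) (Pi A (L ^ N) l x \<phi>) \<phi>"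
      by (rule part_i(2)[OF M l2 lM phi])
    show "eform A (L ^ N) (Pi A (L ^ N) l x \<phi>) \<phi>
             \<le> (\<Sum>y\<in>(\<lambda>q. q + x) ` boxQm l. inner (A (grad \<phi> y)) (grad \<phi> y))"
      by (rule part_i(4)[OF M l2 lM phi])
    show "0 \<le> eform A (L ^ N) (Top A (L ^ N) l \<phi>) \<phi>"
      by (rule part_ii(1)[OF M l2 lM phi])
    show "eform A (L ^ N) (Top A (L ^ N) l \<phi>) \<phi> \<le> eform A (L ^ N) \<phi> \<phi>"
      by (rule part_ii(2)[OF M l2 lM phi])
    assume nz: "\<phi> \<noteq> (\<lambda>_. 0)"
    show "0 < eform A (L ^ N) (Top A (L ^ N) l \<phi>) \<phi>"
      by (rule strict_lower[OF M l3 lM phi nz])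
    show "eform A (L ^ N) (Top A (L ^ N) l \<phi>) \<phi> < eform A (L ^ N) \<phi> \<phi>"
      by (rule strict_upper[OF M l2 lM phi nz assms(1)])
  next
    show "eform A (L ^ N) (Top A (L ^ N) l \<phi>) (Top A (L ^ N) l \<phi>)
         \<le> eform A (L ^ N) (Top A (L ^ N) l \<phi>) \<phi>"
      by (rule part_iii[OF M l2 lM phi])
  qed
qed

end
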